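(* The set of (restrictions to $[a,b]$ of) polynomials is dense in $(\mathcal{LP}[a,b],\|\cdot\|_{[a,b]})$.
   Context: Laplace integral on $[a,b]$: with lower/upper Laplace derivates $\underline{LD}_1F(x)$, $\overline{LD}_1F(x)$ being the minimum of the $\liminf$'s, resp. maximum of the $\limsup$'s, as $s\to\infty$ of $s^2\int_0^\delta e^{-st}[F(x+t)-F(x)]dt$ and $(-s^2)\int_0^\delta e^{-st}[F(x-t)-F(x)]dt$ (one-sided at endpoints), a major function of $f$ is a continuous $U$ with $\underline{LD}_1U\geqslant f$, $\underline{LD}_1U>-\infty$ everywhere on $[a,b]$, a minor function a continuous $V$ with $\overline{LD}_1V\leqslant f$, $\overline{LD}_1V<\infty$ everywhere, and $f$ is Laplace integrable if $\sup_V(V(b)-V(a))=\inf_U(U(b)-U(a))$ is finite, this value being $\int_a^bf$. $\mathcal{LP}[a,b]$ is the space of Laplace integrable functions on $[a,b]$ modulo a.e. equality, with the Alexiewicz norm $\|f\|_{[a,b]}=\sup_{x\in[a,b]}\left|\int_a^xf\right|$. *)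

theory Defs
  imports "HOL-Analysis.Analysis" "HOL-Computational_Algebra.Polynomial"
begin

definition LP_right :: "real \<Rightarrow> (real \<Rightarrow> real) \<Rightarrow> real \<Rightarrow> real \<Rightarrow> real" where
  "LP_right b F x s = s^2 * integral {0..b - x} (\<lambda>t. exp (-(s*t)) * (F (x + t) - F x))"

definition LP_left :: "real \<Rightarrow> (real \<Rightarrow> real) \<Rightarrow> real \<Rightarrow> real \<Rightarrow> real" where
  "LP_left a F x s = (-(s^2)) * integral {0..x - a} (\<lambda>t. exp (-(s*t)) * (F (x - t) - F x))"

definition lower_LD :: "real \<Rightarrow> real \<Rightarrow> (real \<Rightarrow> real) \<Rightarrow> real \<Rightarrow> ereal" where
  "lower_LD a b F x =
     (if x = a then Liminf at_top (\<lambda>s. ereal (LP_right b F x s))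
      else if x = b then Liminf at_top (\<lambda>s. ereal (LP_left a F x s))
      else min (Liminf at_top (\<lambda>s. ereal (LP_right b F x s)))
               (Liminf at_top (\<lambda>s. ereal (LP_left a F x s))))"

definition upper_LD :: "real \<Rightarrow> real \<Rightarrow> (real \<Rightarrow> real) \<Rightarrow> real \<Rightarrow> ereal" where
  "upper_LD a b F x =
     (if x = a then Limsup at_top (\<lambda>s. ereal (LP_right b F x s))
      else if x = b then Limsup at_top (\<lambda>s. ereal (LP_left a F x s))
      else max (Limsup at_top (\<lambda>s. ereal (LP_right b F x s)))
               (Limsup at_top (\<lambda>s. ereal (LP_left a F x s))))"

definition LP_major :: "real \<Rightarrow> real \<Rightarrow> (real \<Rightarrow> real) \<Rightarrow> (real \<Rightarrow> real) \<Rightarrow> bool" where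
  "LP_major a b f U \<longleftrightarrow> continuous_on {a..b} U \<and>
     (\<forall>x\<in>{a..b}. lower_LD a b U x \<ge> ereal (f x) \<and> lower_LD a b U x > -\<infinity>)"

definition LP_minor :: "real \<Rightarrow> real \<Rightarrow> (real \<Rightarrow> real) \<Rightarrow> (real \<Rightarrow> real) \<Rightarrow> bool" where
  "LP_minor a b f V \<longleftrightarrow> continuous_on {a..b} V \<and>
     (\<forall>x\<in>{a..b}. upper_LD a b V x \<le> ereal (f x) \<and> upper_LD a b V x < \<infinity>)"

definition LP_upper :: "real \<Rightarrow> real \<Rightarrow> (real \<Rightarrow> real) \<Rightarrow> ereal" where
  "LP_upper a b f = Inf ((\<lambda>U. ereal (U b - U a)) ` {U. LP_major a b f U})"

definition LP_lower :: "real \<Rightarrow> real \<Rightarrow> (real \<Rightarrow> real) \<Rightarrow> ereal" where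
  "LP_lower a b f = Sup ((\<lambda>V. ereal (V b - V a)) ` {V. LP_minor a b f V})"

definition LP_integrable :: "real \<Rightarrow> real \<Rightarrow> (real \<Rightarrow> real) \<Rightarrow> bool" where
  "LP_integrable a b f \<longleftrightarrow> LP_lower a b f = LP_upper a b f \<and> \<bar>LP_upper a b f\<bar> \<noteq> \<infinity>"

definition LP_integral :: "real \<Rightarrow> real \<Rightarrow> (real \<Rightarrow> real) \<Rightarrow> real" where
  "LP_integral a b f = real_of_ereal (LP_upper a b f)"

end

theory Submission
  imports Defs "HOL-Real_Asymp.Real_Asymp"
begin


lemma LPR_int:
  fixes F :: "real \<Rightarrow> real"
  assumes "continuous_on {y..b} F"
  shows "(\<lambda>t. exp (-(s*t)) * (F (y + t) - F y)) integrable_on {0..b-y}"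
proof (rule integrable_continuous_real)
  have "continuous_on {0..b-y} (\<lambda>t. F (y + t))"
    by (rule continuous_on_compose2[OF assms]) (auto intro!: continuous_intros)
  then show "continuous_on {0..b-y} (\<lambda>t. exp (-(s*t)) * (F (y + t) - F y))"
    by (auto intro!: continuous_intros)
qed

lemma LPL_int:
  fixes F :: "real \<Rightarrow> real"
  assumes "continuous_on {a..y} F"
  shows "(\<lambda>t. exp (-(s*t)) * (F (y - t) - F y)) integrable_on {0..y-a}"
proof (rule integrable_continuous_real)
  have "continuous_on {0..y-a} (\<lambda>t. F (y - t))"
    by (rule continuous_on_compose2[OF assms]) (auto intro!: continuous_intros)
  then show "continuous_on {0..y-a} (\<lambda>t. exp (-(s*t)) * (F (y - t) - F y))"
    by (auto intro!: continuous_intros)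
qed

lemma LPR_add:
  assumes "continuous_on {y..b} F" "continuous_on {y..b} G"
  shows "LP_right b (\<lambda>x. F x + G x) y s = LP_right b F y s + LP_right b G y s"
proof -
  have e: "(\<lambda>t. exp (-(s*t)) * ((F (y + t) + G (y+t)) - (F y + G y))) =
     (\<lambda>t. exp (-(s*t)) * (F (y + t) - F y) + exp (-(s*t)) * (G (y + t) - G y))"
    by (auto simp: algebra_simps)
  show ?thesis unfolding LP_right_def e
    by (simp only: integral_add[OF LPR_int[OF assms(1)] LPR_int[OF assms(2)]] distrib_left)
qed

lemma LPL_add:
  assumes "continuous_on {a..y} F" "continuous_on {a..y} G"
  shows "LP_left a (\<lambda>x. F x + G x) y s = LP_left a F y s + LP_left a G y s"
proof -
  have e: "(\<lambda>t. exp (-(s*t)) * ((F (y - t) + G (y-t)) - (F y + G y))) =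
     (\<lambda>t. exp (-(s*t)) * (F (y - t) - F y) + exp (-(s*t)) * (G (y - t) - G y))"
    by (auto simp: algebra_simps)
  show ?thesis unfolding LP_left_def e
    by (simp only: integral_add[OF LPL_int[OF assms(1)] LPL_int[OF assms(2)]] distrib_left)
qed

lemma LPR_neg: "LP_right b (\<lambda>x. - F x) y s = - LP_right b F y s"
proof -
  have e: "(\<lambda>t. exp (-(s*t)) * (- F (y + t) - - F y)) = (\<lambda>t. - (exp (-(s*t)) * (F (y + t) - F y)))"
    by (auto simp: algebra_simps)
  show ?thesis unfolding LP_right_def e integral_neg by simp
qed

lemma LPL_neg: "LP_left a (\<lambda>x. - F x) y s = - LP_left a F y s"
proof -
  have e: "(\<lambda>t. exp (-(s*t)) * (- F (y - t) - - F y)) = (\<lambda>t. - (exp (-(s*t)) * (F (y - t) - F y)))"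
    by (auto simp: algebra_simps)
  show ?thesis unfolding LP_left_def e integral_neg by simp
qed

lemma LPR_cmul: "LP_right b (\<lambda>x. c * F x) y s = c * LP_right b F y s"
proof -
  have e: "(\<lambda>t. exp (-(s*t)) * (c * F (y + t) - c * F y)) = (\<lambda>t. c * (exp (-(s*t)) * (F (y + t) - F y)))"
    by (auto simp: algebra_simps)
  show ?thesis unfolding LP_right_def e by simp
qed



definition lowerR :: "(real \<Rightarrow> real) \<Rightarrow> real \<Rightarrow> bool" where
  "lowerR g c \<longleftrightarrow> (\<forall>z<c. eventually (\<lambda>s. z < g s) at_top)"

lemma Liminf_ge_iff: "ereal c \<le> Liminf at_top (\<lambda>s. ereal (g s)) \<longleftrightarrow> lowerR g c"
  unfolding le_Liminf_iff lowerR_def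
proof safe
  fix z assume "\<forall>y<ereal c. \<forall>\<^sub>F x in at_top. y < ereal (g x)" "z < c"
  then show "\<forall>\<^sub>F s in at_top. z < g s" by (auto elim!: allE[of _ "ereal z"])
next
  fix y assume A: "\<forall>z<c. \<forall>\<^sub>F s in at_top. z < g s" "y < ereal c"
  show "\<forall>\<^sub>F x in at_top. y < ereal (g x)"
  proof (cases y)
    case (real r) then show ?thesis using A by auto
  next
    case PInf then show ?thesis using A by auto
  next
    case MInf then show ?thesis by auto
  qed
qed

lemma Limsup_le_iff': "Limsup at_top (\<lambda>s. ereal (g s)) \<le> ereal c \<longleftrightarrow> lowerR (\<lambda>s. - g s) (-c)"
  unfolding Limsup_le_iff lowerR_def
proof safe
  fix z assume "\<forall>y>ereal c. \<forall>\<^sub>F x in at_top. ereal (g x) < y" "z < - c"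
  then have "\<forall>\<^sub>F x in at_top. ereal (g x) < ereal (-z)" by (auto elim!: allE[of _ "ereal (-z)"])
  then show "\<forall>\<^sub>F s in at_top. z < - g s" by (rule eventually_mono) auto
next
  fix y assume A: "\<forall>z < - c. \<forall>\<^sub>F s in at_top. z < - g s" "ereal c < y"
  show "\<forall>\<^sub>F x in at_top. ereal (g x) < y"
  proof (cases y)
    case (real r) then show ?thesis using A(2) A(1)[rule_format, of "-r"] by auto
  next
    case PInf then show ?thesis by auto
  next
    case MInf then show ?thesis using A by auto
  qed
qed

definition MJ :: "real \<Rightarrow> real \<Rightarrow> (real \<Rightarrow> real) \<Rightarrow> (real \<Rightarrow> real) \<Rightarrow> bool" where
  "MJ a b f U \<longleftrightarrow> continuous_on {a..b} U \<and>
     (\<forall>y\<in>{a..b}. (y \<noteq> b \<longrightarrow> lowerR (LP_right b U y) (f y)) \<and>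
                  (y \<noteq> a \<longrightarrow> lowerR (LP_left a U y) (f y)))"

lemma lower_LD_ge_iff:
  assumes "a < b"
  shows "ereal c \<le> lower_LD a b F y \<longleftrightarrow>
     (y \<noteq> b \<longrightarrow> lowerR (LP_right b F y) c) \<and> (y \<noteq> a \<longrightarrow> lowerR (LP_left a F y) c)"
  using assms unfolding lower_LD_def
  by (auto simp: Liminf_ge_iff[symmetric])

lemma upper_LD_le_iff:
  assumes "a < b"
  shows "upper_LD a b F y \<le> ereal c \<longleftrightarrow>
     (y \<noteq> b \<longrightarrow> lowerR (LP_right b (\<lambda>x. - F x) y) (-c)) \<and>
     (y \<noteq> a \<longrightarrow> lowerR (LP_left a (\<lambda>x. - F x) y) (-c))"
proof -
  have r: "LP_right b (\<lambda>x. - F x) y = (\<lambda>s. - LP_right b F y s)" by (rule ext, rule LPR_neg)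
  have l: "LP_left a (\<lambda>x. - F x) y = (\<lambda>s. - LP_left a F y s)" by (rule ext, rule LPL_neg)
  show ?thesis using assms unfolding upper_LD_def r l
    by (auto simp: Limsup_le_iff'[symmetric])
qed

lemma major_iff:
  assumes "a < b"
  shows "LP_major a b f U \<longleftrightarrow> MJ a b f U"
proof -
  have "lower_LD a b U x > -\<infinity>" if "ereal (f x) \<le> lower_LD a b U x" for x
    by (rule less_le_trans[OF _ that]) simp
  then show ?thesis unfolding LP_major_def MJ_def lower_LD_ge_iff[OF assms] by blast
qed

lemma cont_neg_iff: "continuous_on S (\<lambda>t. - (V t :: real)) \<longleftrightarrow> continuous_on S V"
proof
  assume "continuous_on S (\<lambda>t. - V t)"
  from continuous_on_minus[OF this] show "continuous_on S V" by simp
qed (rule continuous_on_minus)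

lemma minor_iff:
  assumes "a < b"
  shows "LP_minor a b f V \<longleftrightarrow> MJ a b (\<lambda>t. - f t) (\<lambda>t. - V t)"
proof -
  have "upper_LD a b V x < \<infinity>" if "upper_LD a b V x \<le> ereal (f x)" for x
    by (rule le_less_trans[OF that]) simp
  then show ?thesis unfolding LP_minor_def MJ_def upper_LD_le_iff[OF assms] cont_neg_iff by blast
qed



lemma texp_integral:
  fixes s d :: real
  assumes "s > 0" "d \<ge> 0"
  shows "((\<lambda>t. exp (-(s*t)) * t) has_integral (1/s^2 - (d/s + 1/s^2) * exp (-(s*d)))) {0..d}"
proof -
  define F where "F t = -(t/s + 1/s^2) * exp (-(s*t))" for t
  have "((\<lambda>t. exp (-(s*t)) * t) has_integral (F d - F 0)) {0..d}"
  proof (rule fundamental_theorem_of_calculus[OF assms(2), of F "\<lambda>t. exp (-(s*t)) * t"])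
    fix x :: real assume "x \<in> {0..d}"
    have "(F has_real_derivative exp (-(s*x)) * x) (at x)"
      unfolding F_def using assms(1)
      by (auto intro!: derivative_eq_intros simp: field_simps power2_eq_square)
    then show "(F has_vector_derivative exp (-(s*x)) * x) (at x within {0..d})"
      by (simp add: has_real_derivative_iff_has_vector_derivative has_vector_derivative_at_within)
  qed
  moreover have "F d - F 0 = 1/s^2 - (d/s + 1/s^2) * exp (-(s*d))"
    unfolding F_def by (simp add: algebra_simps)
  ultimately show ?thesis by simp
qed

lemma s2_texp:
  fixes s d :: real
  assumes "s > 0" "d \<ge> 0"
  shows "s^2 * integral {0..d} (\<lambda>t. exp (-(s*t)) * t) = 1 - (s*d + 1) * exp (-(s*d))"
  using integral_unique[OF texp_integral[OF assms]] assms(1)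
  by (simp add: field_simps power2_eq_square)

lemma laplace_core:
  fixes G :: "real \<Rightarrow> real"
  assumes d: "d > 0" and cG: "continuous_on {0..d} G" and G0: "G 0 = 0"
    and lim: "((\<lambda>t. G t / t) \<longlongrightarrow> D) (at_right 0)"
  shows "((\<lambda>s. s^2 * integral {0..d} (\<lambda>t. exp (-(s*t)) * G t)) \<longlongrightarrow> D) at_top"
proof -
  define r where "r t = G t - D * t" for t
  have cr: "continuous_on {0..d} r" unfolding r_def using cG by (auto intro!: continuous_intros)
  have intr: "(\<lambda>t. exp (-(s*t)) * r t) integrable_on {0..d}" for s
    by (rule integrable_continuous_real) (use cr in \<open>auto intro!: continuous_intros\<close>)
  have intt: "(\<lambda>t. exp (-(s*t)) * t) integrable_on {0..d}" for s
    by (rule integrable_continuous_real) (auto intro!: continuous_intros)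
  have split: "s^2 * integral {0..d} (\<lambda>t. exp (-(s*t)) * G t) =
      D * (1 - (s*d + 1) * exp (-(s*d))) + s^2 * integral {0..d} (\<lambda>t. exp (-(s*t)) * r t)"
    if "s > 0" for s
  proof -
    have e: "(\<lambda>t. exp (-(s*t)) * G t) = (\<lambda>t. D * (exp (-(s*t)) * t) + exp (-(s*t)) * r t)"
      by (auto simp: r_def algebra_simps)
    have "integral {0..d} (\<lambda>t. exp (-(s*t)) * G t) =
        D * integral {0..d} (\<lambda>t. exp (-(s*t)) * t) + integral {0..d} (\<lambda>t. exp (-(s*t)) * r t)"
      unfolding e by (subst integral_add) (auto intro!: intr integrable_continuous_real continuous_intros)
    then have "s^2 * integral {0..d} (\<lambda>t. exp (-(s*t)) * G t) =
       D * (s^2 * integral {0..d} (\<lambda>t. exp (-(s*t)) * t)) + s^2 * integral {0..d} (\<lambda>t. exp (-(s*t)) * r t)"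
      by (simp add: algebra_simps)
    then show ?thesis by (simp only: s2_texp[OF that less_imp_le[OF d]])
  qed
  have lim1: "((\<lambda>s. D * (1 - (s*d + 1) * exp (-(s*d)))) \<longlongrightarrow> D) at_top"
  proof -
    have "((\<lambda>s. (s*d + 1) * exp (-(s*d))) \<longlongrightarrow> 0) at_top" using d by real_asymp
    then have "((\<lambda>s. D * (1 - (s*d + 1) * exp (-(s*d)))) \<longlongrightarrow> D * (1 - 0)) at_top"
      by (intro tendsto_intros)
    then show ?thesis by simp
  qed
  obtain M where M: "\<And>t. t \<in> {0..d} \<Longrightarrow> \<bar>r t\<bar> \<le> M"
    using compact_imp_bounded[OF compact_continuous_image[OF cr compact_Icc]]
    unfolding bounded_iff by (auto simp del: atLeastAtMost_iff)
  have M0: "M \<ge> 0" using M[of 0] d by auto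
  have lim2: "((\<lambda>s. s^2 * integral {0..d} (\<lambda>t. exp (-(s*t)) * r t)) \<longlongrightarrow> 0) at_top"
  proof (rule tendstoI)
    fix e :: real assume e: "e > 0"
    define \<eta> where "\<eta> = e / 2"
    have eta: "\<eta> > 0" using e by (simp add: \<eta>_def)
    have "eventually (\<lambda>t. dist (G t / t) D < \<eta>) (at_right 0)"
      using tendstoD[OF lim eta] .
    then obtain h where h: "h > 0" and hb: "\<And>t. t > 0 \<Longrightarrow> t < h \<Longrightarrow> \<bar>G t / t - D\<bar> < \<eta>"
      unfolding eventually_at_right_field dist_real_def by auto
    have small: "\<bar>r t\<bar> \<le> \<eta> * t" if "t > 0" "t < h" for t
    proof -
      have "r t = t * (G t / t - D)" using that by (simp add: r_def field_simps)
      then have "\<bar>r t\<bar> = t * \<bar>G t / t - D\<bar>" using that by (simp add: abs_mult)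
      also have "\<dots> \<le> t * \<eta>" using hb[OF that] that by (intro mult_left_mono) auto
      finally show ?thesis by (simp add: mult.commute)
    qed
    have pw: "\<bar>exp (-(s*t)) * r t\<bar> \<le> \<eta> * (exp (-(s*t)) * t) + M * exp (-(s*h))"
      if s: "s > 0" and t: "t \<in> {0..d}" for s t
    proof (cases "t = 0")
      case True then show ?thesis using G0 M0 by (simp add: r_def)
    next
      case False
      then have tp: "t > 0" using t by auto
      show ?thesis
      proof (cases "t < h")
        case True
        have "\<bar>exp (-(s*t)) * r t\<bar> = exp (-(s*t)) * \<bar>r t\<bar>" by (simp add: abs_mult)
        also have "\<dots> \<le> exp (-(s*t)) * (\<eta> * t)" using small[OF tp True] by (intro mult_left_mono) auto
        finally have "\<bar>exp (-(s*t)) * r t\<bar> \<le> \<eta> * (exp (-(s*t)) * t)" by (simp add: mult_ac)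
        moreover have "0 \<le> M * exp (-(s*h))" using M0 by simp
        ultimately show ?thesis by linarith
      next
        case False
        have "\<bar>exp (-(s*t)) * r t\<bar> = exp (-(s*t)) * \<bar>r t\<bar>" by (simp add: abs_mult)
        also have "\<dots> \<le> exp (-(s*h)) * M"
          using M[OF t] False s by (intro mult_mono) auto
        moreover have "0 \<le> \<eta> * (exp (-(s*t)) * t)" using eta tp by simp
        ultimately show ?thesis by (simp add: mult_ac)
      qed
    qed
    have bound: "\<bar>s^2 * integral {0..d} (\<lambda>t. exp (-(s*t)) * r t)\<bar> \<le> \<eta> + s^2 * (M * exp (-(s*h)) * d)"
      if s: "s > 0" for s
    proof -
      have ib: "(\<lambda>t. \<eta> * (exp (-(s*t)) * t) + M * exp (-(s*h))) integrable_on {0..d}"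
        by (rule integrable_continuous_real) (auto intro!: continuous_intros)
      have "norm (integral {0..d} (\<lambda>t. exp (-(s*t)) * r t)) \<le>
          integral {0..d} (\<lambda>t. \<eta> * (exp (-(s*t)) * t) + M * exp (-(s*h)))"
        by (rule integral_norm_bound_integral[OF intr ib]) (use pw[OF s] in simp)
      then have "\<bar>integral {0..d} (\<lambda>t. exp (-(s*t)) * r t)\<bar> \<le>
          integral {0..d} (\<lambda>t. \<eta> * (exp (-(s*t)) * t) + M * exp (-(s*h)))" by simp
      also have "\<dots> = \<eta> * integral {0..d} (\<lambda>t. exp (-(s*t)) * t) + M * exp (-(s*h)) * d"
        using d by (subst integral_add) (auto intro!: integrable_continuous_real continuous_intros)
      finally have "s^2 * \<bar>integral {0..d} (\<lambda>t. exp (-(s*t)) * r t)\<bar> \<le>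
          s^2 * (\<eta> * integral {0..d} (\<lambda>t. exp (-(s*t)) * t) + M * exp (-(s*h)) * d)"
        by (intro mult_left_mono) auto
      also have "\<dots> = \<eta> * (1 - (s*d + 1) * exp (-(s*d))) + s^2 * (M * exp (-(s*h)) * d)"
      proof -
        have "s^2 * (\<eta> * integral {0..d} (\<lambda>t. exp (-(s*t)) * t) + M * exp (-(s*h)) * d) =
           \<eta> * (s^2 * integral {0..d} (\<lambda>t. exp (-(s*t)) * t)) + s^2 * (M * exp (-(s*h)) * d)"
          by (simp add: algebra_simps)
        then show ?thesis by (simp only: s2_texp[OF s less_imp_le[OF d]])
      qed
      also have "\<dots> \<le> \<eta> + s^2 * (M * exp (-(s*h)) * d)"
      proof -
        have "0 \<le> (s*d + 1) * exp (-(s*d))" using s d by auto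
        then have "0 \<le> \<eta> * ((s*d + 1) * exp (-(s*d)))" using eta by simp
        then show ?thesis by (simp add: algebra_simps)
      qed
      finally show ?thesis by (simp add: abs_mult)
    qed
    have "((\<lambda>s. s^2 * (M * exp (-(s*h)) * d)) \<longlongrightarrow> 0) at_top" using h by real_asymp
    then have ev: "eventually (\<lambda>s. s^2 * (M * exp (-(s*h)) * d) < \<eta>) at_top"
      using eta by (simp add: order_tendsto_iff)
    show "eventually (\<lambda>s. dist (s^2 * integral {0..d} (\<lambda>t. exp (-(s*t)) * r t)) 0 < e) at_top"
      using ev eventually_gt_at_top[of 0]
    proof eventually_elim
      case (elim s)
      then show ?case using bound[of s] by (simp add: \<eta>_def dist_real_def)
    qed
  qed
  have "((\<lambda>s. D * (1 - (s*d + 1) * exp (-(s*d))) + s^2 * integral {0..d} (\<lambda>t. exp (-(s*t)) * r t)) \<longlongrightarrow> D + 0) at_top"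
    by (intro tendsto_add lim1 lim2)
  then have L: "((\<lambda>s. D * (1 - (s*d + 1) * exp (-(s*d))) + s^2 * integral {0..d} (\<lambda>t. exp (-(s*t)) * r t)) \<longlongrightarrow> D) at_top"
    by simp
  have "eventually (\<lambda>s. s^2 * integral {0..d} (\<lambda>t. exp (-(s*t)) * G t) =
      D * (1 - (s*d + 1) * exp (-(s*d))) + s^2 * integral {0..d} (\<lambda>t. exp (-(s*t)) * r t)) at_top"
    using eventually_gt_at_top[of 0] by eventually_elim (rule split)
  then show ?thesis using L by (simp add: tendsto_cong)
qed



lemma cont_bound:
  fixes H :: "real \<Rightarrow> real"
  assumes "continuous_on {0..d} H"
  obtains M where "M \<ge> 0" "\<And>t. t \<in> {0..d} \<Longrightarrow> \<bar>H t\<bar> \<le> M"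
proof -
  obtain M where M: "\<forall>x\<in>H ` {0..d}. norm x \<le> M"
    using compact_imp_bounded[OF compact_continuous_image[OF assms compact_Icc]]
    unfolding bounded_iff by blast
  show ?thesis
  proof (rule that[of "max M 0"])
    fix t assume "t \<in> {0..d}"
    then have "\<bar>H t\<bar> \<le> M" using M by (metis image_eqI real_norm_def)
    then show "\<bar>H t\<bar> \<le> max M 0" by simp
  qed simp
qed

lemma poly_LPR:
  assumes "y < b"
  shows "((\<lambda>s. LP_right b (poly P) y s) \<longlongrightarrow> poly (pderiv P) y) at_top"
proof -
  have D: "((\<lambda>h. (poly P (y + h) - poly P y) / h) \<longlongrightarrow> poly (pderiv P) y) (at 0)"
    using poly_DERIV[of P y] unfolding DERIV_def .
  have "((\<lambda>h. (poly P (y + h) - poly P y) / h) \<longlongrightarrow> poly (pderiv P) y) (at_right 0)"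
    by (rule tendsto_mono[OF at_le D]) simp
  then have "((\<lambda>s. s^2 * integral {0..b-y} (\<lambda>t. exp (-(s*t)) * (poly P (y + t) - poly P y))) \<longlongrightarrow> poly (pderiv P) y) at_top"
    using assms by (intro laplace_core) (auto intro!: continuous_intros)
  then show ?thesis unfolding LP_right_def .
qed

lemma poly_LPL:
  assumes "a < y"
  shows "((\<lambda>s. LP_left a (poly P) y s) \<longlongrightarrow> poly (pderiv P) y) at_top"
proof -
  have D: "((\<lambda>h. (poly P (y + h) - poly P y) / h) \<longlongrightarrow> poly (pderiv P) y) (at 0)"
    using poly_DERIV[of P y] unfolding DERIV_def .
  have "((\<lambda>h. (poly P (y + h) - poly P y) / h) \<longlongrightarrow> poly (pderiv P) y) (at_left 0)"
    by (rule tendsto_mono[OF at_le D]) simp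
  then have "((\<lambda>t. (poly P (y + - t) - poly P y) / - t) \<longlongrightarrow> poly (pderiv P) y) (at_right 0)"
    unfolding at_left_minus filterlim_filtermap by simp
  moreover have "(\<lambda>t. (poly P (y + - t) - poly P y) / - t) = (\<lambda>t. (poly P y - poly P (y - t)) / t)"
    by (rule ext) (simp add: divide_minus_right minus_divide_left)
  ultimately have L: "((\<lambda>t. (poly P y - poly P (y - t)) / t) \<longlongrightarrow> poly (pderiv P) y) (at_right 0)"
    by simp
  have "((\<lambda>s. s^2 * integral {0..y-a} (\<lambda>t. exp (-(s*t)) * (poly P y - poly P (y - t)))) \<longlongrightarrow> poly (pderiv P) y) at_top"
    using assms by (intro laplace_core[OF _ _ _ L]) (auto intro!: continuous_intros)
  moreover have "LP_left a (poly P) y s = s^2 * integral {0..y-a} (\<lambda>t. exp (-(s*t)) * (poly P y - poly P (y - t)))" for s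
  proof -
    have e: "(\<lambda>t. exp (-(s*t)) * (poly P y - poly P (y - t))) = (\<lambda>t. - (exp (-(s*t)) * (poly P (y - t) - poly P y)))"
      by (auto simp: algebra_simps)
    show ?thesis unfolding LP_left_def e integral_neg by simp
  qed
  ultimately show ?thesis by simp
qed

lemma LPR_restrict:
  fixes U :: "real \<Rightarrow> real"
  assumes cU: "continuous_on {y..b} U" and yx: "y < x" and xb: "x \<le> b"
  shows "((\<lambda>s. LP_right b U y s - LP_right x U y s) \<longlongrightarrow> 0) at_top"
proof -
  define H where "H s t = exp (-(s*t)) * (U (y + t) - U y)" for s t
  have cH: "continuous_on {0..b-y} (\<lambda>t. U (y + t) - U y)"
    by (intro continuous_intros continuous_on_compose2[OF cU]) auto
  obtain M where M0: "M \<ge> 0" and M: "\<And>t. t \<in> {0..b-y} \<Longrightarrow> \<bar>U (y + t) - U y\<bar> \<le> M"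
    using cont_bound[OF cH] by blast
  have diff: "LP_right b U y s - LP_right x U y s = s^2 * integral {x-y..b-y} (H s)" for s
  proof -
    have "integral {0..x-y} (H s) + integral {x-y..b-y} (H s) = integral {0..b-y} (H s)"
      using yx xb LPR_int[OF cU, of s] unfolding H_def by (intro Henstock_Kurzweil_Integration.integral_combine) auto
    then have "integral {x-y..b-y} (H s) = integral {0..b-y} (H s) - integral {0..x-y} (H s)" by linarith
    then show ?thesis unfolding LP_right_def H_def[symmetric] by (simp add: right_diff_distrib)
  qed
  have bnd: "\<bar>LP_right b U y s - LP_right x U y s\<bar> \<le> s^2 * ((b - x) * (exp (-(s*(x-y))) * M))"
    if s: "s > 0" for s
  proof -
    have iH: "H s integrable_on {x-y..b-y}"
      unfolding H_def by (rule integrable_on_subinterval[OF LPR_int[OF cU, of s]]) (use yx in auto)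
    have "norm (integral {x-y..b-y} (H s)) \<le> integral {x-y..b-y} (\<lambda>t. exp (-(s*(x-y))) * M)"
    proof (rule integral_norm_bound_integral[OF iH])
      show "(\<lambda>t. exp (-(s*(x-y))) * M) integrable_on {x-y..b-y}" by (intro integrable_continuous_real continuous_intros)
    next
      fix t assume t: "t \<in> {x-y..b-y}"
      have "norm (H s t) = exp (-(s*t)) * \<bar>U (y + t) - U y\<bar>" by (simp add: H_def abs_mult)
      also have "\<dots> \<le> exp (-(s*(x-y))) * M"
        using t s yx M[of t] by (intro mult_mono) auto
      finally show "norm (H s t) \<le> exp (-(s*(x-y))) * M" .
    qed
    also have "\<dots> = (b - x) * (exp (-(s*(x-y))) * M)" using xb by simp
    finally show ?thesis unfolding diff using s by (simp add: abs_mult mult_left_mono)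
  qed
  have "((\<lambda>s. s^2 * ((b - x) * (exp (-(s*(x-y))) * M))) \<longlongrightarrow> 0) at_top"
    using yx by real_asymp
  then show ?thesis
  proof (rule Lim_null_comparison[rotated])
    show "\<forall>\<^sub>F s in at_top. norm (LP_right b U y s - LP_right x U y s) \<le> s^2 * ((b - x) * (exp (-(s*(x-y))) * M))"
      using eventually_gt_at_top[of 0] by eventually_elim (use bnd in simp)
  qed
qed

lemma mono_LP:
  fixes W :: "real \<Rightarrow> real"
  assumes cW: "continuous_on {a..b} W"
    and pos: "\<And>y. y \<in> {a..<b} \<Longrightarrow> \<exists>c>0. eventually (\<lambda>s. LP_right b W y s > c) at_top"
    and cd: "a \<le> c" "c \<le> d" "d \<le> b"
  shows "W c \<le> W d"
proof (rule ccontr)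
  assume "\<not> W c \<le> W d"
  then have Wd: "W d < W c" by simp
  define S where "S = {c..d} \<inter> W -` {W c..}"
  have cS: "closed S" unfolding S_def
    by (rule continuous_closed_preimage) (use cW cd in \<open>auto intro: continuous_on_subset\<close>)
  have "c \<in> S" using cd by (auto simp: S_def)
  have bS: "bdd_above S" by (auto simp: S_def bdd_above_def)
  define z where "z = Sup S"
  have zS: "z \<in> S" unfolding z_def by (rule closed_contains_Sup) (use \<open>c \<in> S\<close> bS cS in auto)
  have zd: "z < d"
  proof -
    have "z \<le> d" "z \<noteq> d" using zS Wd by (auto simp: S_def)
    then show ?thesis by simp
  qed
  have za: "a \<le> z" using zS cd by (auto simp: S_def)
  define \<eta> where "\<eta> = d - z"
  have eta: "\<eta> > 0" using zd by (simp add: \<eta>_def)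
  have neg: "W (z + t) - W z \<le> 0" if "0 < t" "t \<le> \<eta>" for t
  proof -
    have "z + t \<in> {c..d}" using that zS by (auto simp: S_def \<eta>_def)
    moreover have "z + t \<notin> S"
    proof
      assume "z + t \<in> S"
      then have "z + t \<le> z" unfolding z_def by (rule cSup_upper[OF _ bS])
      then show False using that by simp
    qed
    ultimately have "W (z + t) < W c" by (auto simp: S_def)
    moreover have "W c \<le> W z" using zS by (auto simp: S_def)
    ultimately show ?thesis by simp
  qed
  have cW': "continuous_on {z..b} W" by (rule continuous_on_subset[OF cW]) (use za in auto)
  have cH: "continuous_on {0..b-z} (\<lambda>t. W (z + t) - W z)"
    by (intro continuous_intros continuous_on_compose2[OF cW']) auto
  obtain M where M0: "M \<ge> 0" and M: "\<And>t. t \<in> {0..b-z} \<Longrightarrow> \<bar>W (z + t) - W z\<bar> \<le> M"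
    using cont_bound[OF cH] by blast
  have bnd: "LP_right b W z s \<le> s^2 * ((b - z) * (exp (-(s*\<eta>)) * M))" if s: "s > 0" for s
  proof -
    have "integral {0..b-z} (\<lambda>t. exp (-(s*t)) * (W (z + t) - W z)) \<le> integral {0..b-z} (\<lambda>t. exp (-(s*\<eta>)) * M)"
    proof (rule integral_le[OF LPR_int[OF cW']])
      show "(\<lambda>t. exp (-(s*\<eta>)) * M) integrable_on {0..b-z}" by (intro integrable_continuous_real continuous_intros)
    next
      fix t assume t: "t \<in> {0..b-z}"
      show "exp (-(s*t)) * (W (z + t) - W z) \<le> exp (-(s*\<eta>)) * M"
      proof (cases "t \<le> \<eta>")
        case True
        show ?thesis
        proof (cases "t = 0")
          case False
          then have "exp (-(s*t)) * (W (z + t) - W z) \<le> 0"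
            using neg[of t] True t by (simp add: mult_nonneg_nonpos)
          then show ?thesis using M0 by (smt (verit) exp_gt_zero mult_nonneg_nonneg)
        qed (use M0 in simp)
      next
        case False
        have "exp (-(s*t)) * (W (z + t) - W z) \<le> exp (-(s*t)) * \<bar>W (z + t) - W z\<bar>"
          by (intro mult_left_mono) auto
        also have "\<dots> \<le> exp (-(s*\<eta>)) * M"
          using False s M[OF t] by (intro mult_mono) auto
        finally show ?thesis .
      qed
    qed
    also have "\<dots> = (b - z) * (exp (-(s*\<eta>)) * M)" using zd cd by simp
    finally show ?thesis unfolding LP_right_def by (intro mult_left_mono) auto
  qed
  obtain c0 where c0: "c0 > 0" and ev: "eventually (\<lambda>s. LP_right b W z s > c0) at_top"
    using pos[of z] za zd cd by auto
  have "((\<lambda>s. s^2 * ((b - z) * (exp (-(s*\<eta>)) * M))) \<longlongrightarrow> 0) at_top"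
    using eta by real_asymp
  then have "eventually (\<lambda>s. s^2 * ((b - z) * (exp (-(s*\<eta>)) * M)) < c0) at_top"
    using c0 by (simp add: order_tendsto_iff)
  then have "eventually (\<lambda>s. s^2 * ((b - z) * (exp (-(s*\<eta>)) * M)) < c0 \<and> c0 < LP_right b W z s \<and> s > 0) at_top"
    using ev eventually_gt_at_top[of 0] by eventually_elim auto
  then obtain s where "s^2 * ((b - z) * (exp (-(s*\<eta>)) * M)) < c0" "c0 < LP_right b W z s" "s > 0"
    unfolding eventually_at_top_linorder by blast
  then show False using bnd[of s] by simp
qed



lemma lowerR_transfer:
  assumes "lowerR g c" "((\<lambda>s. g s - g' s) \<longlongrightarrow> 0) at_top"
  shows "lowerR g' c"
  unfolding lowerR_def
proof safe
  fix z assume z: "z < c"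
  define m where "m = (c - z) / 2"
  have m: "m > 0" using z by (simp add: m_def)
  have "z + m < c" using z by (simp add: m_def field_simps)
  then have "eventually (\<lambda>s. z + m < g s) at_top" using assms(1) unfolding lowerR_def by blast
  moreover have "eventually (\<lambda>s. dist (g s - g' s) 0 < m) at_top" using tendstoD[OF assms(2) m] .
  ultimately show "eventually (\<lambda>s. z < g' s) at_top"
  proof eventually_elim
    case (elim s) then show ?case unfolding dist_real_def abs_less_iff by (smt (verit))
  qed
qed

lemma lowerR_sub_lim:
  assumes "lowerR g c" "(h \<longlongrightarrow> L) at_top"
  shows "lowerR (\<lambda>s. g s - h s) (c - L)"
  unfolding lowerR_def
proof safe
  fix z assume z: "z < c - L"
  define m where "m = (c - L - z) / 2"
  have m: "m > 0" using z by (simp add: m_def)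
  have "eventually (\<lambda>s. c - m < g s) at_top" using assms(1) m unfolding lowerR_def by auto
  moreover have "eventually (\<lambda>s. dist (h s) L < m) at_top" using tendstoD[OF assms(2) m] .
  ultimately show "eventually (\<lambda>s. z < g s - h s) at_top"
  proof eventually_elim
    case (elim s)
    have m2: "c - L - z = 2 * m" by (simp add: m_def)
    from elim have "h s - L < m" unfolding dist_real_def abs_less_iff by blast
    with elim(1) m2 show ?case by linarith
  qed
qed

lemma LPR_diff:
  assumes "continuous_on {y..b} F" "continuous_on {y..b} G"
  shows "LP_right b (\<lambda>x. F x - G x) y s = LP_right b F y s - LP_right b G y s"
proof -
  have "LP_right b (\<lambda>x. F x + - G x) y s = LP_right b F y s + LP_right b (\<lambda>x. - G x) y s"
    by (rule LPR_add) (use assms in \<open>auto intro: continuous_intros\<close>)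
  then show ?thesis by (simp add: LPR_neg)
qed

lemma LPL_diff:
  assumes "continuous_on {a..y} F" "continuous_on {a..y} G"
  shows "LP_left a (\<lambda>x. F x - G x) y s = LP_left a F y s - LP_left a G y s"
proof -
  have "LP_left a (\<lambda>x. F x + - G x) y s = LP_left a F y s + LP_left a (\<lambda>x. - G x) y s"
    by (rule LPL_add) (use assms in \<open>auto intro: continuous_intros\<close>)
  then show ?thesis by (simp add: LPL_neg)
qed

lemma MJ_restrict:
  assumes ax: "a < x" and xb: "x \<le> b" and M: "MJ a b f U"
  shows "MJ a x f U"
proof -
  have cU: "continuous_on {a..b} U" using M by (simp add: MJ_def)
  show ?thesis unfolding MJ_def
  proof (rule conjI; (intro ballI)?)
    show "continuous_on {a..x} U" by (rule continuous_on_subset[OF cU]) (use xb in auto)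
  next
    fix y assume y: "y \<in> {a..x}"
    then have yb: "y \<in> {a..b}" using xb by auto
    show "(y \<noteq> x \<longrightarrow> lowerR (LP_right x U y) (f y)) \<and> (y \<noteq> a \<longrightarrow> lowerR (LP_left a U y) (f y))"
    proof safe
      assume "y \<noteq> x"
      then have yx: "y < x" using y by auto
      then have "lowerR (LP_right b U y) (f y)" using M yb xb unfolding MJ_def by auto
      moreover have "((\<lambda>s. LP_right b U y s - LP_right x U y s) \<longlongrightarrow> 0) at_top"
        by (rule LPR_restrict[OF _ yx xb]) (rule continuous_on_subset[OF cU], use y in auto)
      ultimately show "lowerR (LP_right x U y) (f y)" by (rule lowerR_transfer)
    next
      assume "y \<noteq> a"
      then show "lowerR (LP_left a U y) (f y)" using M yb unfolding MJ_def by auto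
    qed
  qed
qed

lemma MJ_shift:
  assumes M: "MJ a b f U"
  shows "MJ a b (\<lambda>t. f t - poly (pderiv Q) t) (\<lambda>t. U t - poly Q t)"
proof -
  have cU: "continuous_on {a..b} U" using M by (simp add: MJ_def)
  have cQ: "continuous_on S (poly Q)" for S by (auto intro: continuous_intros)
  show ?thesis unfolding MJ_def
  proof (rule conjI; (intro ballI)?)
    show "continuous_on {a..b} (\<lambda>t. U t - poly Q t)" using cU by (auto intro!: continuous_intros)
  next
    fix y assume y: "y \<in> {a..b}"
    show "(y \<noteq> b \<longrightarrow> lowerR (LP_right b (\<lambda>t. U t - poly Q t) y) (f y - poly (pderiv Q) y)) \<and>
          (y \<noteq> a \<longrightarrow> lowerR (LP_left a (\<lambda>t. U t - poly Q t) y) (f y - poly (pderiv Q) y))"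
    proof safe
      assume "y \<noteq> b"
      then have yb: "y < b" using y by auto
      have e: "LP_right b (\<lambda>t. U t - poly Q t) y = (\<lambda>s. LP_right b U y s - LP_right b (poly Q) y s)"
        by (rule ext, rule LPR_diff[OF continuous_on_subset[OF cU] cQ]) (use y in auto)
      have "lowerR (LP_right b U y) (f y)" using M y yb unfolding MJ_def by auto
      then show "lowerR (LP_right b (\<lambda>t. U t - poly Q t) y) (f y - poly (pderiv Q) y)"
        unfolding e by (rule lowerR_sub_lim[OF _ poly_LPR[OF yb]])
    next
      assume "y \<noteq> a"
      then have ay: "a < y" using y by auto
      have e: "LP_left a (\<lambda>t. U t - poly Q t) y = (\<lambda>s. LP_left a U y s - LP_left a (poly Q) y s)"
        by (rule ext, rule LPL_diff[OF continuous_on_subset[OF cU] cQ]) (use y in auto)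
      have "lowerR (LP_left a U y) (f y)" using M y ay unfolding MJ_def by auto
      then show "lowerR (LP_left a (\<lambda>t. U t - poly Q t) y) (f y - poly (pderiv Q) y)"
        unfolding e by (rule lowerR_sub_lim[OF _ poly_LPL[OF ay]])
    qed
  qed
qed

lemma id_LPR:
  assumes "y < b"
  shows "(LP_right b (\<lambda>x. x) y \<longlongrightarrow> 1) at_top"
proof -
  have "(LP_right b (poly [:0,1:]) y \<longlongrightarrow> poly (pderiv [:0,1:]) y) at_top"
    using poly_LPR[OF assms] by simp
  moreover have "poly [:0,1:] = (\<lambda>x::real. x)" by (rule ext) simp
  ultimately show ?thesis by (simp add: pderiv_pCons)
qed

lemma MJ_mono:
  assumes ab: "a < b" and MU: "MJ a b f U" and MV: "MJ a b (\<lambda>t. - f t) V"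
    and cd: "a \<le> c" "c \<le> d" "d \<le> b"
  shows "U c + V c \<le> U d + V d"
proof -
  have cU: "continuous_on {a..b} U" using MU by (simp add: MJ_def)
  have cV: "continuous_on {a..b} V" using MV by (simp add: MJ_def)
  have key: "U c + V c + \<epsilon> * c \<le> U d + V d + \<epsilon> * d" if eps: "\<epsilon> > 0" for \<epsilon>
  proof -
    define W where "W x = U x + V x + \<epsilon> * x" for x
    have "W c \<le> W d"
    proof (rule mono_LP[OF _ _ cd])
      show "continuous_on {a..b} W" unfolding W_def using cU cV by (auto intro!: continuous_intros)
    next
      fix y assume y: "y \<in> {a..<b}"
      have cUy: "continuous_on {y..b} U" by (rule continuous_on_subset[OF cU]) (use y in auto)
      have cVy: "continuous_on {y..b} V" by (rule continuous_on_subset[OF cV]) (use y in auto)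
      have e: "LP_right b W y s = LP_right b U y s + LP_right b V y s + \<epsilon> * LP_right b (\<lambda>x. x) y s" for s
      proof -
        have "LP_right b W y s = LP_right b (\<lambda>x. U x + V x) y s + LP_right b (\<lambda>x. \<epsilon> * x) y s"
          unfolding W_def by (rule LPR_add) (use cUy cVy in \<open>auto intro!: continuous_intros\<close>)
        also have "\<dots> = LP_right b U y s + LP_right b V y s + \<epsilon> * LP_right b (\<lambda>x. x) y s"
          by (simp add: LPR_add[OF cUy cVy] LPR_cmul[of b \<epsilon> "\<lambda>x. x"])
        finally show ?thesis .
      qed
      have yb: "y \<noteq> b" using y by auto
      have "lowerR (LP_right b U y) (f y)" using MU y yb unfolding MJ_def by auto
      then have e1: "eventually (\<lambda>s. f y - \<epsilon>/4 < LP_right b U y s) at_top"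
        using eps unfolding lowerR_def by auto
      have "lowerR (LP_right b V y) (- f y)" using MV y yb unfolding MJ_def by auto
      then have e2: "eventually (\<lambda>s. - f y - \<epsilon>/4 < LP_right b V y s) at_top"
        using eps unfolding lowerR_def by auto
      have e3: "eventually (\<lambda>s. 3/4 < LP_right b (\<lambda>x. x) y s) at_top"
        by (rule order_tendstoD(1)[OF id_LPR]) (use y in auto)
      have "eventually (\<lambda>s. \<epsilon>/4 < LP_right b W y s) at_top"
        using e1 e2 e3
      proof eventually_elim
        case (elim s)
        have "\<epsilon> * (3/4) \<le> \<epsilon> * LP_right b (\<lambda>x. x) y s" using elim(3) eps by simp
        then show ?case unfolding e using elim(1,2) by linarith
      qed
      then show "\<exists>c>0. eventually (\<lambda>s. c < LP_right b W y s) at_top" using eps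
        by (intro exI[of _ "\<epsilon>/4"]) auto
    qed
    then show ?thesis unfolding W_def .
  qed
  show ?thesis
  proof (rule field_le_epsilon)
    fix e :: real assume e: "e > 0"
    define \<epsilon> where "\<epsilon> = e / (d - c + 1)"
    have eps: "\<epsilon> > 0" using e cd by (simp add: \<epsilon>_def)
    have "\<epsilon> * (d - c) \<le> e"
    proof -
      have "\<epsilon> * (d - c) \<le> \<epsilon> * (d - c + 1)" using eps by simp
      also have "\<dots> = e" using cd by (simp add: \<epsilon>_def)
      finally show ?thesis .
    qed
    then show "U c + V c \<le> U d + V d + e" using key[OF eps] by (simp add: algebra_simps)
  qed
qed



lemma rpf_poly:
  fixes g :: "real \<Rightarrow> real"
  assumes "real_polynomial_function g"
  shows "\<exists>p. \<forall>x. g x = poly p x"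
  using assms
proof induction
  case (linear f)
  then obtain c where "f = (\<lambda>x. x * c)" using real_bounded_linear by blast
  then show ?case by (intro exI[of _ "[:0, c:]"]) simp
next
  case (const c)
  then show ?case by (intro exI[of _ "[:c:]"]) simp
next
  case (add f g)
  then obtain p q where "\<forall>x. f x = poly p x" "\<forall>x. g x = poly q x" by blast
  then show ?case by (intro exI[of _ "p + q"]) simp
next
  case (mult f g)
  then obtain p q where "\<forall>x. f x = poly p x" "\<forall>x. g x = poly q x" by blast
  then show ?case by (intro exI[of _ "p * q"]) simp
qed

lemma weierstrass_poly:
  fixes U :: "real \<Rightarrow> real"
  assumes "continuous_on {a..b} U" "e > 0"
  obtains P where "\<And>x. x \<in> {a..b} \<Longrightarrow> \<bar>U x - poly P x\<bar> < e"
proof -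
  obtain g where g: "real_polynomial_function g" "\<And>x. x \<in> {a..b} \<Longrightarrow> \<bar>U x - g x\<bar> < e"
    using Stone_Weierstrass_real_polynomial_function[OF compact_Icc assms] by blast
  obtain P where "\<forall>x. g x = poly P x" using rpf_poly[OF g(1)] by blast
  then show ?thesis using g(2) that by auto
qed

lemma LP_integrable_crit:
  assumes ax: "a < x"
    and ex: "\<And>\<eta>. \<eta> > 0 \<Longrightarrow> \<exists>U V. MJ a x g U \<and> MJ a x (\<lambda>t. - g t) (\<lambda>t. - V t) \<and>
                 (U x - U a) - (V x - V a) < \<eta>"
  shows "LP_integrable a x g"
    and "\<And>U V. MJ a x g U \<Longrightarrow> MJ a x (\<lambda>t. - g t) (\<lambda>t. - V t) \<Longrightarrow>
            V x - V a \<le> LP_integral a x g \<and> LP_integral a x g \<le> U x - U a"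
proof -
  define A where "A = (\<lambda>V. ereal (V x - V a)) ` {V. LP_minor a x g V}"
  define B where "B = (\<lambda>U. ereal (U x - U a)) ` {U. LP_major a x g U}"
  have lo: "LP_lower a x g = Sup A" unfolding A_def LP_lower_def ..
  have up: "LP_upper a x g = Inf B" unfolding B_def LP_upper_def ..
  have ord: "V x - V a \<le> U x - U a" if "MJ a x g U" "MJ a x (\<lambda>t. - g t) (\<lambda>t. - V t)" for U V
    using MJ_mono[OF ax that, of a x] ax by simp
  have SI: "Sup A \<le> Inf B"
    unfolding Sup_le_iff le_Inf_iff A_def B_def
    using ord by (auto simp: major_iff[OF ax] minor_iff[OF ax])
  have IS: "Inf B \<le> Sup A"
  proof (rule ereal_le_epsilon2)
    fix e :: real assume e: "e > 0"
    obtain U V where UV: "MJ a x g U" "MJ a x (\<lambda>t. - g t) (\<lambda>t. - V t)" "(U x - U a) - (V x - V a) < e"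
      using ex[OF e] by blast
    have "Inf B \<le> ereal (U x - U a)"
      by (rule Inf_lower) (use UV in \<open>auto simp: B_def major_iff[OF ax]\<close>)
    also have "\<dots> \<le> ereal (V x - V a) + ereal e" using UV(3) by simp
    also have "\<dots> \<le> Sup A + ereal e"
    proof -
      have "ereal (V x - V a) \<le> Sup A"
        by (rule Sup_upper) (use UV in \<open>auto simp: A_def minor_iff[OF ax]\<close>)
      then show ?thesis by (rule add_right_mono)
    qed
    finally show "Inf B \<le> Sup A + ereal e" .
  qed
  obtain U0 V0 where UV0: "MJ a x g U0" "MJ a x (\<lambda>t. - g t) (\<lambda>t. - V0 t)"
    using ex[of 1] by auto
  have ub: "Inf B \<le> ereal (U0 x - U0 a)"
    by (rule Inf_lower) (use UV0 in \<open>auto simp: B_def major_iff[OF ax]\<close>)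
  have lb: "ereal (V0 x - V0 a) \<le> Sup A"
    by (rule Sup_upper) (use UV0 in \<open>auto simp: A_def minor_iff[OF ax]\<close>)
  have eq: "Sup A = Inf B" using SI IS by simp
  obtain L where L: "Inf B = ereal L"
    using ub lb eq by (cases "Inf B") auto
  show "LP_integrable a x g" unfolding LP_integrable_def lo up eq L by simp
  fix U V assume UV: "MJ a x g U" "MJ a x (\<lambda>t. - g t) (\<lambda>t. - V t)"
  have "Inf B \<le> ereal (U x - U a)"
    by (rule Inf_lower) (use UV in \<open>auto simp: B_def major_iff[OF ax]\<close>)
  moreover have "ereal (V x - V a) \<le> Sup A"
    by (rule Sup_upper) (use UV in \<open>auto simp: A_def minor_iff[OF ax]\<close>)
  moreover have "LP_integral a x g = L" unfolding LP_integral_def up L by simp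
  ultimately show "V x - V a \<le> LP_integral a x g \<and> LP_integral a x g \<le> U x - U a"
    using eq L by simp
qed

lemma gap_exists:
  assumes ab: "a < b" and int: "LP_integrable a b f" and eta: "\<eta> > 0"
  shows "\<exists>U V. MJ a b f U \<and> MJ a b (\<lambda>t. - f t) (\<lambda>t. - V t) \<and> (U b - U a) - (V b - V a) < \<eta>"
proof -
  from int have eq: "LP_lower a b f = LP_upper a b f" and fin: "\<bar>LP_upper a b f\<bar> \<noteq> \<infinity>"
    unfolding LP_integrable_def by auto
  obtain r where r: "LP_upper a b f = ereal r" using fin by (cases "LP_upper a b f") auto
  have "Inf ((\<lambda>U. ereal (U b - U a)) ` {U. LP_major a b f U}) < ereal (r + \<eta>/2)"
    using r eta unfolding LP_upper_def by simp
  then obtain U where U: "LP_major a b f U" "U b - U a < r + \<eta>/2"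
    unfolding Inf_less_iff by auto
  have "ereal (r - \<eta>/2) < Sup ((\<lambda>V. ereal (V b - V a)) ` {V. LP_minor a b f V})"
    using r eta eq unfolding LP_lower_def by simp
  then obtain V where V: "LP_minor a b f V" "r - \<eta>/2 < V b - V a"
    unfolding less_Sup_iff by auto
  show ?thesis
    using U V by (intro exI[of _ U] exI[of _ V]) (auto simp: major_iff[OF ab] minor_iff[OF ab])
qed



theorem theorem5p11:
  fixes a b :: real and f :: "real \<Rightarrow> real" and \<epsilon> :: real
  assumes "a < b" and "LP_integrable a b f" and "\<epsilon> > 0"
  shows "\<exists>p :: real poly.
           (\<forall>x\<in>{a<..b}. LP_integrable a x (\<lambda>t. f t - poly p t)) \<and>
           (\<forall>x\<in>{a<..b}. \<bar>LP_integral a x (\<lambda>t. f t - poly p t)\<bar> \<le> \<epsilon>)"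
proof -
  note ab = assms(1) and int = assms(2) and eps = assms(3)
  obtain U1 V1 where U1: "MJ a b f U1" and V1: "MJ a b (\<lambda>t. - f t) (\<lambda>t. - V1 t)"
    and gap1: "(U1 b - U1 a) - (V1 b - V1 a) < \<epsilon>/2"
    using gap_exists[OF ab int, of "\<epsilon>/2"] eps by auto
  have cU1: "continuous_on {a..b} U1" using U1 by (simp add: MJ_def)
  obtain P where P: "\<And>x. x \<in> {a..b} \<Longrightarrow> \<bar>U1 x - poly P x\<bar> < \<epsilon>/4"
    using weierstrass_poly[OF cU1, of "\<epsilon>/4"] eps by auto
  define p where "p = pderiv P"
  define g where "g = (\<lambda>t. f t - poly p t)"
  have gapx: "(U x - U a) - (V x - V a) \<le> (U b - U a) - (V b - V a)"
    if "MJ a b f U" "MJ a b (\<lambda>t. - f t) (\<lambda>t. - V t)" "a \<le> x" "x \<le> b" for U V x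
    using MJ_mono[OF ab that(1,2) that(3,4) order_refl] by simp
  have trans: "MJ a x g (\<lambda>t. U t - poly P t) \<and> MJ a x (\<lambda>t. - g t) (\<lambda>t. - (V t - poly P t))"
    if "MJ a b f U" "MJ a b (\<lambda>t. - f t) (\<lambda>t. - V t)" "a < x" "x \<le> b" for U V x
  proof
    show "MJ a x g (\<lambda>t. U t - poly P t)"
      unfolding g_def p_def by (rule MJ_shift[OF MJ_restrict[OF that(3,4,1)]])
    have "MJ a x (\<lambda>t. - f t - poly (pderiv (- P)) t) (\<lambda>t. - V t - poly (- P) t)"
      by (rule MJ_shift[OF MJ_restrict[OF that(3,4,2)]])
    moreover have "(\<lambda>t. - f t - poly (pderiv (- P)) t) = (\<lambda>t. - g t)"
      by (rule ext) (simp add: g_def p_def pderiv_minus)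
    moreover have "(\<lambda>t. - V t - poly (- P) t) = (\<lambda>t. - (V t - poly P t))"
      by (rule ext) simp
    ultimately show "MJ a x (\<lambda>t. - g t) (\<lambda>t. - (V t - poly P t))" by simp
  qed
  have main: "LP_integrable a x g \<and> \<bar>LP_integral a x g\<bar> \<le> \<epsilon>" if x: "x \<in> {a<..b}" for x
  proof -
    have ax: "a < x" and xb: "x \<le> b" using x by auto
    have exg: "\<exists>U V. MJ a x g U \<and> MJ a x (\<lambda>t. - g t) (\<lambda>t. - V t) \<and> (U x - U a) - (V x - V a) < \<eta>"
      if eta: "\<eta> > 0" for \<eta>
    proof -
      obtain U V where UV: "MJ a b f U" "MJ a b (\<lambda>t. - f t) (\<lambda>t. - V t)" "(U b - U a) - (V b - V a) < \<eta>"
        using gap_exists[OF ab int eta] by blast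
      have "(U x - U a) - (V x - V a) < \<eta>" using gapx[OF UV(1,2), of x] ax xb UV(3) by simp
      then show ?thesis using trans[OF UV(1,2) ax xb]
        by (intro exI[of _ "\<lambda>t. U t - poly P t"] exI[of _ "\<lambda>t. V t - poly P t"]) auto
    qed
    have I: "LP_integrable a x g" by (rule LP_integrable_crit(1)[OF ax exg])
    have B: "(V1 x - poly P x) - (V1 a - poly P a) \<le> LP_integral a x g \<and>
             LP_integral a x g \<le> (U1 x - poly P x) - (U1 a - poly P a)"
      using LP_integrable_crit(2)[OF ax exg, of "\<lambda>t. U1 t - poly P t" "\<lambda>t. V1 t - poly P t"]
        trans[OF U1 V1 ax xb] by blast
    have A1: "\<bar>U1 x - poly P x\<bar> < \<epsilon>/4" and A2: "\<bar>U1 a - poly P a\<bar> < \<epsilon>/4" using P ax xb by auto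
    have G: "(U1 x - U1 a) - (V1 x - V1 a) < \<epsilon>/2"
      using gapx[OF U1 V1, of x] ax xb gap1 by simp
    from A1 have A1': "U1 x - poly P x < \<epsilon>/4" "-(U1 x - poly P x) < \<epsilon>/4" by linarith+
    from A2 have A2': "U1 a - poly P a < \<epsilon>/4" "-(U1 a - poly P a) < \<epsilon>/4" by linarith+
    from B have B1: "(V1 x - poly P x) - (V1 a - poly P a) \<le> LP_integral a x g"
      and B2: "LP_integral a x g \<le> (U1 x - poly P x) - (U1 a - poly P a)" by auto
    have "LP_integral a x g \<le> \<epsilon>" using B2 A1' A2' eps by linarith
    moreover have "- LP_integral a x g \<le> \<epsilon>" using B1 A1' A2' G by linarith
    ultimately have "\<bar>LP_integral a x g\<bar> \<le> \<epsilon>" by linarith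
    with I show ?thesis by simp
  qed
  show ?thesis
    by (intro exI[of _ p]) (use main in \<open>auto simp: g_def\<close>)
qed


end
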